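(* Let $X$ be a real Banach space with a normalized unconditional basis $\mathcal B=(e_n)_{n=1}^\infty$ with biorthogonal functionals $(e_n^* )$ and unconditional constant $M$, and let $\mathcal E=(\varepsilon_n)_{n=1}^\infty$ be a sequence of nonnegative numbers. Let $x_0$ be an extreme point of the brick $K_{\mathcal B,\mathcal E}$. Then $\|x\|\le M\|x_0\|$ for every $x\in K_{\mathcal B,\mathcal E}$. In particular, if $\mathcal B$ is $1$-unconditional then $\|x\|\le\|x_0\|$ for every $x\in K_{\mathcal B,\mathcal E}$.
   Context: The brick is $K_{\mathcal B,\mathcal E}=\{x\in X:\ |e_n^*(x)|\le\varepsilon_n \text{ for all } n\}$. A point $x_0\in A$ is an extreme point of $A$ if for every nonzero $x\in X$ there is $\lambda\in[-1,1]$ with $x_0+\lambda x\notin A$. For an unconditional basis and a sign sequence $\Theta=(\theta_n)$, $\theta_n=\pm1$, let $M_\Theta x=\sum_n\theta_ne_n^*(x)e_n$; the unconditional constant is $\sup_\Theta\|M_\Theta\|$, and the basis is $1$-unconditional if this constant equals $1$. *)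

theory Defs
  imports "HOL-Analysis.Analysis"
begin

definition schauder_basis :: "(nat \<Rightarrow> 'a::banach) \<Rightarrow> bool" where
  "schauder_basis e \<longleftrightarrow>
     (\<forall>x. \<exists>!a::nat \<Rightarrow> real. (\<lambda>N. \<Sum>n<N. a n *\<^sub>R e n) \<longlonglongrightarrow> x)"

definition coeff :: "(nat \<Rightarrow> 'a::banach) \<Rightarrow> nat \<Rightarrow> 'a \<Rightarrow> real" where
  "coeff e n x = (THE a::nat \<Rightarrow> real. (\<lambda>N. \<Sum>k<N. a k *\<^sub>R e k) \<longlonglongrightarrow> x) n"

definition sign_seqs :: "(nat \<Rightarrow> real) set" where
  "sign_seqs = {\<theta>. \<forall>n. \<theta> n = 1 \<or> \<theta> n = -1}"

definition sign_mult :: "(nat \<Rightarrow> 'a::banach) \<Rightarrow> (nat \<Rightarrow> real) \<Rightarrow> 'a \<Rightarrow> 'a" where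
  "sign_mult e \<theta> x = (\<Sum>n. (\<theta> n * coeff e n x) *\<^sub>R e n)"

text \<open>Unconditional basis: a Schauder basis such that for every choice of signs the
  series sum theta_n e_n^*(x) e_n converges for every x, the resulting operators M_Theta
  are bounded, and the unconditional constant sup_Theta ||M_Theta|| is finite
  (boundedness/finiteness is automatic in a Banach space, by uniform boundedness).\<close>
definition unconditional_basis :: "(nat \<Rightarrow> 'a::banach) \<Rightarrow> bool" where
  "unconditional_basis e \<longleftrightarrow> schauder_basis e \<and>
     (\<forall>\<theta>\<in>sign_seqs. \<forall>x. summable (\<lambda>n. (\<theta> n * coeff e n x) *\<^sub>R e n)) \<and>
     (\<forall>\<theta>\<in>sign_seqs. bounded_linear (sign_mult e \<theta>)) \<and>
     bdd_above ((\<lambda>\<theta>. onorm (sign_mult e \<theta>)) ` sign_seqs)"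

definition unconditional_constant :: "(nat \<Rightarrow> 'a::banach) \<Rightarrow> real" where
  "unconditional_constant e = (SUP \<theta>\<in>sign_seqs. onorm (sign_mult e \<theta>))"

definition brick :: "(nat \<Rightarrow> 'a::banach) \<Rightarrow> (nat \<Rightarrow> real) \<Rightarrow> 'a set" where
  "brick e \<epsilon> = {x. \<forall>n. \<bar>coeff e n x\<bar> \<le> \<epsilon> n}"

definition extreme_pt :: "'a::real_vector \<Rightarrow> 'a set \<Rightarrow> bool" where
  "extreme_pt x0 A \<longleftrightarrow> x0 \<in> A \<and>
     (\<forall>x. x \<noteq> 0 \<longrightarrow> (\<exists>t\<in>{-1..1::real}. x0 + t *\<^sub>R x \<notin> A))"

end

theory Submission
  imports Defs
begin

lemma coeff_lim:
  assumes "schauder_basis e"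
  shows "(\<lambda>N. \<Sum>k<N. coeff e k x *\<^sub>R e k) \<longlonglongrightarrow> x"
proof -
  have ex: "\<exists>!a::nat \<Rightarrow> real. (\<lambda>N. \<Sum>n<N. a n *\<^sub>R e n) \<longlonglongrightarrow> x"
    using assms unfolding schauder_basis_def by blast
  from theI'[OF ex] show ?thesis unfolding coeff_def by simp
qed

lemma coeff_unique:
  assumes "schauder_basis e" "(\<lambda>N. \<Sum>k<N. a k *\<^sub>R e k) \<longlonglongrightarrow> x"
  shows "coeff e n x = a n"
proof -
  have ex: "\<exists>!a::nat \<Rightarrow> real. (\<lambda>N. \<Sum>n<N. a n *\<^sub>R e n) \<longlonglongrightarrow> x"
    using assms unfolding schauder_basis_def by blast
  have "(THE a::nat \<Rightarrow> real. (\<lambda>N. \<Sum>k<N. a k *\<^sub>R e k) \<longlonglongrightarrow> x) = a"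
    by (rule the1_equality[OF ex]) (rule assms(2))
  then show ?thesis unfolding coeff_def by simp
qed

lemma coeff_lin:
  assumes "schauder_basis e"
  shows "coeff e n (x + t *\<^sub>R y) = coeff e n x + t * coeff e n y"
proof -
  have "(\<lambda>N. (\<Sum>k<N. coeff e k x *\<^sub>R e k) + t *\<^sub>R (\<Sum>k<N. coeff e k y *\<^sub>R e k)) \<longlonglongrightarrow> x + t *\<^sub>R y"
    by (intro tendsto_intros coeff_lim assms)
  moreover have "\<And>N. (\<Sum>k<N. coeff e k x *\<^sub>R e k) + t *\<^sub>R (\<Sum>k<N. coeff e k y *\<^sub>R e k)
      = (\<Sum>k<N. (coeff e k x + t * coeff e k y) *\<^sub>R e k)"
    by (simp add: scaleR_sum_right sum.distrib scaleR_add_left)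
  ultimately have "(\<lambda>N. \<Sum>k<N. (coeff e k x + t * coeff e k y) *\<^sub>R e k) \<longlonglongrightarrow> x + t *\<^sub>R y"
    by simp
  from coeff_unique[OF assms this] show ?thesis .
qed

lemma coeff_finite:
  assumes "schauder_basis e"
  shows "coeff e k (\<Sum>n<N. c n *\<^sub>R e n) = (if k < N then c k else 0)"
proof -
  let ?a = "\<lambda>k. if k < N then c k else 0"
  have "\<forall>\<^sub>F M in sequentially. (\<Sum>k<M. ?a k *\<^sub>R e k) = (\<Sum>n<N. c n *\<^sub>R e n)"
  proof (rule eventually_sequentiallyI[of N])
    fix M assume "N \<le> M"
    have "(\<Sum>k<M. ?a k *\<^sub>R e k) = (\<Sum>k<N. ?a k *\<^sub>R e k)"
      by (rule sum.mono_neutral_right) (use \<open>N \<le> M\<close> in auto)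
    then show "(\<Sum>k<M. ?a k *\<^sub>R e k) = (\<Sum>n<N. c n *\<^sub>R e n)" by simp
  qed
  then have "(\<lambda>M. \<Sum>k<M. ?a k *\<^sub>R e k) \<longlonglongrightarrow> (\<Sum>n<N. c n *\<^sub>R e n)"
    by (rule tendsto_eventually)
  from coeff_unique[OF assms this] show ?thesis .
qed

lemma coeff_zero:
  assumes "schauder_basis e"
  shows "coeff e k 0 = 0"
  using coeff_finite[OF assms, where k=k and N=0 and c="\<lambda>_. 0"] by simp

lemma coeff_basis:
  assumes "schauder_basis e"
  shows "coeff e k (e m) = (if k = m then 1 else 0)"
proof -
  have "coeff e k (\<Sum>n<Suc m. (if n = m then 1 else 0) *\<^sub>R e n) = (if k < Suc m then (if k = m then 1 else 0) else 0)"
    by (rule coeff_finite[OF assms])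
  moreover have "(\<Sum>n<Suc m. (if n = m then 1 else 0) *\<^sub>R e n) = e m"
    by (simp add: if_distrib cong: if_cong)
  ultimately show ?thesis by auto
qed

lemma convex_signs:
  fixes v :: "nat \<Rightarrow> 'a::real_normed_vector"
  assumes "finite S"
  shows "(\<forall>n\<in>S. \<bar>l n\<bar> \<le> 1) \<Longrightarrow> (\<forall>\<theta>\<in>sign_seqs. norm (w + (\<Sum>n\<in>S. \<theta> n *\<^sub>R v n)) \<le> B)
     \<Longrightarrow> norm (w + (\<Sum>n\<in>S. l n *\<^sub>R v n)) \<le> B"
  using assms
proof (induction S arbitrary: w rule: finite_induct)
  case empty
  have "(\<lambda>n. 1::real) \<in> sign_seqs" by (simp add: sign_seqs_def)
  then show ?case using empty by force
next
  case (insert a S)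
  have IH1: "norm ((w + v a) + (\<Sum>n\<in>S. l n *\<^sub>R v n)) \<le> B"
  proof (rule insert.IH)
    show "\<forall>n\<in>S. \<bar>l n\<bar> \<le> 1" using insert by auto
    show "\<forall>\<theta>\<in>sign_seqs. norm (w + v a + (\<Sum>n\<in>S. \<theta> n *\<^sub>R v n)) \<le> B"
    proof
      fix \<theta> assume th: "\<theta> \<in> sign_seqs"
      then have "\<theta>(a := 1) \<in> sign_seqs" by (auto simp: sign_seqs_def)
      then have "norm (w + (\<Sum>n\<in>insert a S. (\<theta>(a:=1)) n *\<^sub>R v n)) \<le> B" using insert by blast
      moreover have "(\<Sum>n\<in>S. (\<theta>(a:=1)) n *\<^sub>R v n) = (\<Sum>n\<in>S. \<theta> n *\<^sub>R v n)"
        by (rule sum.cong) (use insert in auto)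
      ultimately show "norm (w + v a + (\<Sum>n\<in>S. \<theta> n *\<^sub>R v n)) \<le> B"
        using insert by (simp add: add.assoc)
    qed
  qed
  have IH2: "norm ((w - v a) + (\<Sum>n\<in>S. l n *\<^sub>R v n)) \<le> B"
  proof (rule insert.IH)
    show "\<forall>n\<in>S. \<bar>l n\<bar> \<le> 1" using insert by auto
    show "\<forall>\<theta>\<in>sign_seqs. norm (w - v a + (\<Sum>n\<in>S. \<theta> n *\<^sub>R v n)) \<le> B"
    proof
      fix \<theta> assume th: "\<theta> \<in> sign_seqs"
      then have "\<theta>(a := -1) \<in> sign_seqs" by (auto simp: sign_seqs_def)
      then have nb: "norm (w + (\<Sum>n\<in>insert a S. (\<theta>(a:=-1)) n *\<^sub>R v n)) \<le> B" using insert by blast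
      moreover have "(\<Sum>n\<in>S. (\<theta>(a:=-1)) n *\<^sub>R v n) = (\<Sum>n\<in>S. \<theta> n *\<^sub>R v n)"
        by (rule sum.cong) (use insert in auto)
      moreover have eqq: "w - v a + (\<Sum>n\<in>S. \<theta> n *\<^sub>R v n) = w + (\<Sum>n\<in>insert a S. (\<theta>(a:=-1)) n *\<^sub>R v n)"
        using insert calculation(2) by (simp add: algebra_simps)
      ultimately show "norm (w - v a + (\<Sum>n\<in>S. \<theta> n *\<^sub>R v n)) \<le> B"
        using nb eqq by (simp only:)
    qed
  qed
  define p where "p = (1 + l a) / 2"
  have la: "\<bar>l a\<bar> \<le> 1" using insert by auto
  have p0: "0 \<le> p" "p \<le> 1" using la unfolding p_def by auto
  let ?R = "\<Sum>n\<in>S. l n *\<^sub>R v n"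
  have eq: "w + (\<Sum>n\<in>insert a S. l n *\<^sub>R v n) = p *\<^sub>R ((w + v a) + ?R) + (1 - p) *\<^sub>R ((w - v a) + ?R)"
  proof -
    have "((1 + l a)/2) *\<^sub>R v a + ((1+l a)/2) *\<^sub>R v a = ((1 + l a)/2 + (1+l a)/2) *\<^sub>R v a"
      by (rule scaleR_add_left[symmetric])
    also have "\<dots> = (1 + l a) *\<^sub>R v a" by simp
    also have "\<dots> = v a + l a *\<^sub>R v a" by (simp add: scaleR_add_left)
    finally have h2: "((1 + l a)/2) *\<^sub>R v a + ((1+l a)/2) *\<^sub>R v a = v a + l a *\<^sub>R v a" .
    show ?thesis using insert by (simp add: p_def algebra_simps scaleR_add_right scaleR_diff_right)
      (metis h2)
  qed
  have "norm (p *\<^sub>R ((w + v a) + ?R) + (1 - p) *\<^sub>R ((w - v a) + ?R))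
      \<le> p * norm ((w + v a) + ?R) + (1 - p) * norm ((w - v a) + ?R)"
    using p0 by (metis (no_types, lifting) abs_of_nonneg diff_ge_0_iff_ge norm_scaleR norm_triangle_ineq order_trans order_refl)
  also have "\<dots> \<le> p * B + (1 - p) * B"
    using IH1 IH2 p0 by (intro add_mono mult_left_mono) auto
  finally have "norm (w + (\<Sum>n\<in>insert a S. l n *\<^sub>R v n)) \<le> p * B + (1 - p) * B"
    by (simp only: eq)
  then show ?case by (simp add: algebra_simps)
qed

theorem proposition2p8:
  fixes e :: "nat \<Rightarrow> 'a::banach" and \<epsilon> :: "nat \<Rightarrow> real" and x0 :: 'a
  assumes "unconditional_basis e"
    and "\<forall>n. norm (e n) = 1"
    and "\<forall>n. \<epsilon> n \<ge> 0"
    and "extreme_pt x0 (brick e \<epsilon>)"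
  shows "(\<forall>x\<in>brick e \<epsilon>. norm x \<le> unconditional_constant e * norm x0) \<and>
         (unconditional_constant e = 1 \<longrightarrow> (\<forall>x\<in>brick e \<epsilon>. norm x \<le> norm x0))"
proof -
  have sb: "schauder_basis e" using assms(1) unfolding unconditional_basis_def by blast
  have bl: "\<And>\<theta>. \<theta> \<in> sign_seqs \<Longrightarrow> bounded_linear (sign_mult e \<theta>)"
    using assms(1) unfolding unconditional_basis_def by blast
  have bdd: "bdd_above ((\<lambda>\<theta>. onorm (sign_mult e \<theta>)) ` sign_seqs)"
    using assms(1) unfolding unconditional_basis_def by auto
  define M where "M = unconditional_constant e"
  have onM: "\<And>\<theta>. \<theta> \<in> sign_seqs \<Longrightarrow> onorm (sign_mult e \<theta>) \<le> M"
    unfolding M_def unconditional_constant_def by (rule cSUP_upper[OF _ bdd])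
  define c where "c n = coeff e n x0" for n
  have x0b: "x0 \<in> brick e \<epsilon>" using assms(4) unfolding extreme_pt_def by blast
  have ceq: "\<bar>c n\<bar> = \<epsilon> n" for n
  proof (rule ccontr)
    assume ne: "\<bar>c n\<bar> \<noteq> \<epsilon> n"
    have "\<bar>c n\<bar> \<le> \<epsilon> n" using x0b unfolding brick_def c_def by blast
    with ne have lt: "\<bar>c n\<bar> < \<epsilon> n" by simp
    define d where "d = \<epsilon> n - \<bar>c n\<bar>"
    have d0: "d > 0" using lt unfolding d_def by simp
    have "d *\<^sub>R e n \<noteq> 0" using d0 assms(2) by (metis norm_zero scaleR_eq_0_iff zero_neq_one less_irrefl)
    then obtain t where t: "t \<in> {-1..1}" "x0 + t *\<^sub>R (d *\<^sub>R e n) \<notin> brick e \<epsilon>"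
      using assms(4) unfolding extreme_pt_def by blast
    then obtain k where k: "\<bar>coeff e k (x0 + t *\<^sub>R (d *\<^sub>R e n))\<bar> > \<epsilon> k"
      unfolding brick_def by (auto simp: not_le)
    have ck: "coeff e k (x0 + t *\<^sub>R (d *\<^sub>R e n)) = c k + t * d * (if k = n then 1 else 0)"
      using coeff_lin[OF sb, of k x0 t "d *\<^sub>R e n"] coeff_lin[OF sb, of k 0 d "e n"]
        coeff_basis[OF sb, of k n]
      by (simp add: c_def coeff_zero[OF sb])
    have ckb: "\<bar>c k\<bar> \<le> \<epsilon> k" using x0b unfolding brick_def c_def by blast
    show False
    proof (cases "k = n")
      case True
      have "\<bar>t\<bar> \<le> 1" using t(1) by auto
      then have "\<bar>t * d\<bar> \<le> d" using d0 by (simp add: abs_mult mult_left_le_one_le)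
      moreover have "\<bar>c n + t*d\<bar> \<le> \<bar>c n\<bar> + \<bar>t*d\<bar>" by (rule abs_triangle_ineq)
      ultimately show ?thesis using k ck True d_def by simp
    next
      case False
      then show ?thesis using k ck ckb by simp
    qed
  qed
  have main: "norm x \<le> M * norm x0" if xb: "x \<in> brick e \<epsilon>" for x
  proof -
    define a where "a n = coeff e n x" for n
    have ale: "\<bar>a n\<bar> \<le> \<bar>c n\<bar>" for n using xb ceq unfolding brick_def a_def by auto
    define l where "l n = (if c n = 0 then 0 else a n / c n)" for n
    have lc: "l n * c n = a n" for n
      using ale[of n] unfolding l_def by auto
    have l1: "\<bar>l n\<bar> \<le> 1" for n
      using ale[of n] unfolding l_def by (auto simp: abs_divide divide_le_eq_1)
    have fin: "norm (\<Sum>n<N. a n *\<^sub>R e n) \<le> M * norm (\<Sum>n<N. c n *\<^sub>R e n)" for N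
    proof -
      let ?y = "\<Sum>n<N. c n *\<^sub>R e n"
      have "norm (0 + (\<Sum>n\<in>{..<N}. l n *\<^sub>R (c n *\<^sub>R e n))) \<le> M * norm ?y"
      proof (rule convex_signs)
        show "finite {..<N}" by simp
        show "\<forall>n\<in>{..<N}. \<bar>l n\<bar> \<le> 1" using l1 by auto
        show "\<forall>\<theta>\<in>sign_seqs. norm (0 + (\<Sum>n\<in>{..<N}. \<theta> n *\<^sub>R (c n *\<^sub>R e n))) \<le> M * norm ?y"
        proof
          fix \<theta> assume th: "\<theta> \<in> sign_seqs"
          have cy: "coeff e n ?y = (if n < N then c n else 0)" for n by (rule coeff_finite[OF sb])
          have "sign_mult e \<theta> ?y = (\<Sum>n<N. (\<theta> n * coeff e n ?y) *\<^sub>R e n)"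
            unfolding sign_mult_def
            by (rule suminf_finite) (auto simp: cy)
          also have "\<dots> = (\<Sum>n\<in>{..<N}. \<theta> n *\<^sub>R (c n *\<^sub>R e n))"
            by (rule sum.cong) (auto simp: cy)
          finally have eq: "sign_mult e \<theta> ?y = (\<Sum>n\<in>{..<N}. \<theta> n *\<^sub>R (c n *\<^sub>R e n))" .
          have "norm (sign_mult e \<theta> ?y) \<le> onorm (sign_mult e \<theta>) * norm ?y"
            by (rule onorm[OF bl[OF th]])
          also have "\<dots> \<le> M * norm ?y" by (rule mult_right_mono[OF onM[OF th]]) simp
          finally show "norm (0 + (\<Sum>n\<in>{..<N}. \<theta> n *\<^sub>R (c n *\<^sub>R e n))) \<le> M * norm ?y"
            using eq by simp
        qed
      qed
      moreover have "(\<Sum>n\<in>{..<N}. l n *\<^sub>R (c n *\<^sub>R e n)) = (\<Sum>n<N. a n *\<^sub>R e n)"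
        by (rule sum.cong) (auto simp: lc)
      ultimately show ?thesis by simp
    qed
    have L1: "(\<lambda>N. norm (\<Sum>n<N. a n *\<^sub>R e n)) \<longlonglongrightarrow> norm x"
      unfolding a_def by (intro tendsto_norm coeff_lim sb)
    have L2: "(\<lambda>N. M * norm (\<Sum>n<N. c n *\<^sub>R e n)) \<longlonglongrightarrow> M * norm x0"
      unfolding c_def by (intro tendsto_intros coeff_lim sb)
    show ?thesis using L1 L2 fin by (intro LIMSEQ_le) auto
  qed
  show ?thesis using main unfolding M_def by auto
qed

end
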